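(* Let $d\ge2$, $n\ge1$ be integers and, for real $b,c$, let $$\rho_{bc}=a\sum_{i=0}^{d-1}|ii\rangle\langle ii|+b\sum_{i<j}|\psi^-_{ij}\rangle\langle\psi^-_{ij}|+c\sum_{i<j}|\psi^+_{ij}\rangle\langle\psi^+_{ij}|,\quad a=\frac1d\Big(1-(b+c)\frac{d(d-1)}2\Big).$$ Let $B=\big(\tfrac{1}{d(d-1)},0\big)$, $G=\big(\tfrac{3}{d(2d-1)},\tfrac{1}{d(2d-1)}\big)$, $K=\big(\tfrac1{d(d-1)},\tfrac1{d(d-1)}\big)$. If $\rho_{G}$ (the state $\rho_{bc}$ with $(b,c)=G$) is pseudo $n$-copy undistillable, then $\rho_{bc}$ is pseudo $n$-copy undistillable for every $(b,c)$ in the triangle (convex hull) $BGK$.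
   Context: $|\psi^{\pm}_{ij}\rangle=\frac1{\sqrt2}(|ij\rangle\pm|ji\rangle)$, sums over $0\le i<j\le d-1$. For a bipartite state $\rho$ on $\mathcal{H}_A\otimes\mathcal{H}_B$, $\rho^{PT}$ is the partial transpose on $\mathcal{H}_B$. $\rho$ is pseudo one-copy undistillable if $\langle\phi|\rho^{PT}|\phi\rangle\ge0$ for all $|\phi\rangle$ of Schmidt rank two; $\rho$ is pseudo $n$-copy undistillable if $\rho^{\otimes n}$, viewed as a bipartite state on $\mathcal{H}_A^{\otimes n}\otimes\mathcal{H}_B^{\otimes n}$, is pseudo one-copy undistillable. *)

theory Defs
  imports "HOL-Analysis.Analysis"
begin

text \<open>Two-qudit space C^d (x) C^d: vectors indexed by pairs (i,j) with i,j < d.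
  Computational basis ket |ij>.\<close>
definition ket2 :: "nat \<Rightarrow> nat \<Rightarrow> nat \<times> nat \<Rightarrow> complex" where
  "ket2 i j = (\<lambda>(k,l). if k = i \<and> l = j then 1 else 0)"

definition psi :: "complex \<Rightarrow> nat \<Rightarrow> nat \<Rightarrow> nat \<times> nat \<Rightarrow> complex" where
  "psi s i j = (\<lambda>u. (ket2 i j u + s * ket2 j i u) / complex_of_real (sqrt 2))"

definition proj :: "('i \<Rightarrow> complex) \<Rightarrow> 'i \<Rightarrow> 'i \<Rightarrow> complex" where
  "proj v = (\<lambda>u u'. v u * cnj (v u'))"

definition pairs_lt :: "nat \<Rightarrow> (nat \<times> nat) set" where
  "pairs_lt d = {(i,j). i < j \<and> j < d}"

definition coef_a :: "nat \<Rightarrow> real \<Rightarrow> real \<Rightarrow> real" where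
  "coef_a d b c = (1 - (b + c) * (real d * (real d - 1) / 2)) / real d"

definition rho_bc :: "nat \<Rightarrow> real \<Rightarrow> real \<Rightarrow> nat \<times> nat \<Rightarrow> nat \<times> nat \<Rightarrow> complex" where
  "rho_bc d b c = (\<lambda>u u'.
      complex_of_real (coef_a d b c) * (\<Sum>i<d. proj (ket2 i i) u u')
    + complex_of_real b * (\<Sum>(i,j)\<in>pairs_lt d. proj (psi (-1) i j) u u')
    + complex_of_real c * (\<Sum>(i,j)\<in>pairs_lt d. proj (psi 1 i j) u u'))"

text \<open>Basis of (C^d)^{(x) n}: lists of length n with entries < d.\<close>
definition idx :: "nat \<Rightarrow> nat \<Rightarrow> nat list set" where
  "idx d n = {xs. length xs = n \<and> set xs \<subseteq> {..<d}}"

text \<open>rho^{(x) n} regrouped as an operator on H_A^{(x)n} (x) H_B^{(x)n}.\<close>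
definition tensor_pow ::
  "(nat \<times> nat \<Rightarrow> nat \<times> nat \<Rightarrow> complex) \<Rightarrow> nat \<Rightarrow>
   nat list \<times> nat list \<Rightarrow> nat list \<times> nat list \<Rightarrow> complex" where
  "tensor_pow rho n = (\<lambda>(xs,ys) (xs',ys'). \<Prod>k<n. rho (xs!k, ys!k) (xs'!k, ys'!k))"

definition partial_transpose :: "('a \<times> 'b \<Rightarrow> 'a \<times> 'b \<Rightarrow> complex) \<Rightarrow> 'a \<times> 'b \<Rightarrow> 'a \<times> 'b \<Rightarrow> complex" where
  "partial_transpose M = (\<lambda>(x,y) (x',y'). M (x,y') (x',y))"

definition lin_indep2 :: "'a set \<Rightarrow> ('a \<Rightarrow> complex) \<Rightarrow> ('a \<Rightarrow> complex) \<Rightarrow> bool" where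
  "lin_indep2 I v w \<longleftrightarrow> (\<forall>\<alpha> \<beta>. (\<forall>x\<in>I. \<alpha> * v x + \<beta> * w x = 0) \<longrightarrow> \<alpha> = 0 \<and> \<beta> = 0)"

definition schmidt_rank_two :: "'a set \<Rightarrow> 'b set \<Rightarrow> ('a \<times> 'b \<Rightarrow> complex) \<Rightarrow> bool" where
  "schmidt_rank_two I J \<phi> \<longleftrightarrow> (\<exists>a1 a2 b1 b2.
     lin_indep2 I a1 a2 \<and> lin_indep2 J b1 b2 \<and>
     (\<forall>x\<in>I. \<forall>y\<in>J. \<phi> (x,y) = a1 x * b1 y + a2 x * b2 y))"

definition qform :: "'a set \<Rightarrow> 'b set \<Rightarrow> ('a \<times> 'b \<Rightarrow> 'a \<times> 'b \<Rightarrow> complex) \<Rightarrow> ('a \<times> 'b \<Rightarrow> complex) \<Rightarrow> complex" where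
  "qform I J M \<phi> = (\<Sum>u\<in>I \<times> J. \<Sum>v\<in>I \<times> J. cnj (\<phi> u) * M u v * \<phi> v)"

definition cnonneg :: "complex \<Rightarrow> bool" where
  "cnonneg z \<longleftrightarrow> Im z = 0 \<and> Re z \<ge> 0"

definition pseudo_one_copy_undist :: "'a set \<Rightarrow> 'b set \<Rightarrow> ('a \<times> 'b \<Rightarrow> 'a \<times> 'b \<Rightarrow> complex) \<Rightarrow> bool" where
  "pseudo_one_copy_undist I J M \<longleftrightarrow>
     (\<forall>\<phi>. schmidt_rank_two I J \<phi> \<longrightarrow> cnonneg (qform I J (partial_transpose M) \<phi>))"

definition pseudo_n_copy_undist :: "nat \<Rightarrow> nat \<Rightarrow> (nat \<times> nat \<Rightarrow> nat \<times> nat \<Rightarrow> complex) \<Rightarrow> bool" where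
  "pseudo_n_copy_undist d n rho \<longleftrightarrow>
     pseudo_one_copy_undist (idx d n) (idx d n) (tensor_pow rho n)"

end

theory Submission
  imports Defs
begin

definition lsts :: "nat \<Rightarrow> 'a set \<Rightarrow> 'a list set" where
  "lsts n T = {ts. length ts = n \<and> set ts \<subseteq> T}"

lemma lsts_Suc: "lsts (Suc n) T = (\<lambda>(t,ts). t # ts) ` (T \<times> lsts n T)"
  unfolding lsts_def
  by (auto simp: length_Suc_conv image_iff)

lemma finite_lsts: "finite T \<Longrightarrow> finite (lsts n T)"
  unfolding lsts_def using finite_lists_length_eq[of T n] by (simp add: conj_commute)

lemma prod_sum_lsts:
  fixes f :: "nat \<Rightarrow> 'a \<Rightarrow> 'b::comm_semiring_1"
  assumes "finite T"
  shows "(\<Prod>k<n. \<Sum>t\<in>T. f k t) = (\<Sum>ts\<in>lsts n T. \<Prod>k<n. f k (ts!k))"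
proof (induction n arbitrary: f)
  case 0
  have "lsts 0 T = {[]}" by (auto simp: lsts_def)
  then show ?case by simp
next
  case (Suc n)
  have "(\<Prod>k<Suc n. \<Sum>t\<in>T. f k t) = (\<Sum>t\<in>T. f 0 t) * (\<Prod>k<n. \<Sum>t\<in>T. f (Suc k) t)"
    by (simp only: prod.lessThan_Suc_shift)
  also have "\<dots> = (\<Sum>t\<in>T. f 0 t) * (\<Sum>ts\<in>lsts n T. \<Prod>k<n. f (Suc k) (ts!k))"
    using Suc by simp
  also have "\<dots> = (\<Sum>(t,ts)\<in>T \<times> lsts n T. f 0 t * (\<Prod>k<n. f (Suc k) (ts!k)))"
    by (simp add: sum.cartesian_product[symmetric] sum_product)
  also have "\<dots> = (\<Sum>(t,ts)\<in>T \<times> lsts n T. \<Prod>k<Suc n. f k ((t#ts)!k))"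
    by (simp only: prod.lessThan_Suc_shift nth_Cons_0 nth_Cons_Suc)
  also have "\<dots> = (\<Sum>ts\<in>lsts (Suc n) T. \<Prod>k<Suc n. f k (ts!k))"
    unfolding lsts_Suc
    by (subst sum.reindex) (auto simp: inj_on_def case_prod_beta)
  finally show ?case .
qed

lemma idx_lsts: "idx d n = lsts n {..<d}"
  by (simp add: idx_def lsts_def)

definition weak2 :: "'a set \<Rightarrow> 'b set \<Rightarrow> ('a \<times> 'b \<Rightarrow> complex) \<Rightarrow> bool" where
  "weak2 I J \<phi> \<longleftrightarrow> (\<exists>a1 a2 b1 b2. \<forall>x\<in>I. \<forall>y\<in>J. \<phi> (x,y) = a1 x * b1 y + a2 x * b2 y)"

lemma qform_cong:
  assumes "\<And>u v. u \<in> I \<times> J \<Longrightarrow> v \<in> I \<times> J \<Longrightarrow> M u v = M' u v"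
  shows "qform I J M \<phi> = qform I J M' \<phi>"
  unfolding qform_def using assms by (intro sum.cong refl) auto

lemma qform_cong_vec:
  assumes "\<And>u. u \<in> I \<times> J \<Longrightarrow> \<phi> u = \<psi> u"
  shows "qform I J M \<phi> = qform I J M \<psi>"
  unfolding qform_def using assms by (intro sum.cong refl) auto

lemma qform_sum:
  "qform I J (\<lambda>u v. \<Sum>s\<in>S. M s u v) \<phi> = (\<Sum>s\<in>S. qform I J (M s) \<phi>)"
proof -
  have "qform I J (\<lambda>u v. \<Sum>s\<in>S. M s u v) \<phi> = (\<Sum>u\<in>I\<times>J. \<Sum>v\<in>I\<times>J. \<Sum>s\<in>S. cnj (\<phi> u) * M s u v * \<phi> v)"
    unfolding qform_def by (simp add: sum_distrib_left sum_distrib_right)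
  also have "\<dots> = (\<Sum>u\<in>I\<times>J. \<Sum>s\<in>S. \<Sum>v\<in>I\<times>J. cnj (\<phi> u) * M s u v * \<phi> v)"
    by (rule sum.cong[OF refl], rule sum.swap)
  also have "\<dots> = (\<Sum>s\<in>S. \<Sum>u\<in>I\<times>J. \<Sum>v\<in>I\<times>J. cnj (\<phi> u) * M s u v * \<phi> v)"
    by (rule sum.swap)
  finally show ?thesis unfolding qform_def .
qed

lemma cnonneg_sum: "(\<And>s. s \<in> S \<Longrightarrow> cnonneg (f s)) \<Longrightarrow> cnonneg (sum f S)"
  unfolding cnonneg_def by (simp add: Im_sum Re_sum sum_nonneg)

lemma cnonneg_of_real: "0 \<le> r \<Longrightarrow> cnonneg (complex_of_real r)"
  by (simp add: cnonneg_def)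

definition Kr :: "'a set \<Rightarrow> 'b set \<Rightarrow> ('a \<Rightarrow> 'a \<Rightarrow> complex) \<Rightarrow> ('b \<Rightarrow> 'b \<Rightarrow> complex)
   \<Rightarrow> ('a \<times> 'b \<Rightarrow> 'a \<times> 'b \<Rightarrow> complex) \<Rightarrow> 'a \<times> 'b \<Rightarrow> 'a \<times> 'b \<Rightarrow> complex" where
  "Kr I J A B X = (\<lambda>(x,y) (x',y'). \<Sum>p\<in>I. \<Sum>q\<in>J. \<Sum>p'\<in>I. \<Sum>q'\<in>J.
      A x p * B y q * X (p,q) (p',q') * cnj (A x' p') * cnj (B y' q'))"

lemma sum_pair: "(\<Sum>u\<in>A \<times> B. f u) = (\<Sum>x\<in>A. \<Sum>y\<in>B. f (x,y))"
  by (subst sum.cartesian_product) simp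

lemma sum4_swap: "(\<Sum>p\<in>I. \<Sum>q\<in>J. \<Sum>p'\<in>I. \<Sum>q'\<in>J.
      \<Sum>x\<in>I. \<Sum>y\<in>J. \<Sum>x'\<in>I. \<Sum>y'\<in>J. F p q p' q' x y x' y') =
   (\<Sum>x\<in>I. \<Sum>y\<in>J. \<Sum>x'\<in>I. \<Sum>y'\<in>J.
      \<Sum>p\<in>I. \<Sum>q\<in>J. \<Sum>p'\<in>I. \<Sum>q'\<in>J. F p q p' q' x y x' y')"
proof -
  let ?S = "I \<times> J \<times> I \<times> J"
  have e: "\<And>g. (\<Sum>p\<in>I. \<Sum>q\<in>J. \<Sum>p'\<in>I. \<Sum>q'\<in>J. g p q p' q') = (\<Sum>(p,q,p',q')\<in>?S. g p q p' q')"
    by (simp add: sum.cartesian_product[symmetric])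
  show ?thesis
    apply (simp only: e)
    apply (simp only: split_def)
    apply (rule sum.swap)
    done
qed

lemma prod_sums2: "(\<Sum>x\<in>I. \<Sum>y\<in>J. \<alpha> x y) * (c::complex) * (\<Sum>x'\<in>I. \<Sum>y'\<in>J. \<beta> x' y') =
  (\<Sum>x\<in>I. \<Sum>y\<in>J. \<Sum>x'\<in>I. \<Sum>y'\<in>J. \<alpha> x y * c * \<beta> x' y')"
  by (simp only: sum_distrib_right) (simp only: sum_distrib_left)

lemma prod_sums4: "(c1::complex) * (\<Sum>p\<in>I. \<Sum>q\<in>J. \<Sum>p'\<in>I. \<Sum>q'\<in>J. K p q p' q') * c2 =
  (\<Sum>p\<in>I. \<Sum>q\<in>J. \<Sum>p'\<in>I. \<Sum>q'\<in>J. c1 * K p q p' q' * c2)"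
  by (simp only: sum_distrib_left) (simp only: sum_distrib_right)

lemma qform_Kr:
  shows "qform I J (Kr I J A B X) \<phi> =
     qform I J X (\<lambda>(p,q). \<Sum>x\<in>I. \<Sum>y\<in>J. cnj (A x p) * cnj (B y q) * \<phi> (x,y))"
proof -
  let ?T = "\<lambda>p q p' q' x y x' y'. cnj (\<phi> (x,y)) * A x p * B y q * X (p,q) (p',q') * cnj (A x' p') * cnj (B y' q') * \<phi> (x',y')"
  have L: "qform I J (Kr I J A B X) \<phi> = (\<Sum>x\<in>I. \<Sum>y\<in>J. \<Sum>x'\<in>I. \<Sum>y'\<in>J.
      \<Sum>p\<in>I. \<Sum>q\<in>J. \<Sum>p'\<in>I. \<Sum>q'\<in>J. ?T p q p' q' x y x' y')"
    unfolding qform_def Kr_def sum_pair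
    apply (simp only: prod.case prod_sums4)
    apply (intro sum.cong refl)
    apply (simp only: mult_ac)
    done
  have R: "qform I J X (\<lambda>(p,q). \<Sum>x\<in>I. \<Sum>y\<in>J. cnj (A x p) * cnj (B y q) * \<phi> (x,y)) =
     (\<Sum>p\<in>I. \<Sum>q\<in>J. \<Sum>p'\<in>I. \<Sum>q'\<in>J.
      \<Sum>x\<in>I. \<Sum>y\<in>J. \<Sum>x'\<in>I. \<Sum>y'\<in>J. ?T p q p' q' x y x' y')"
    unfolding qform_def sum_pair
    apply (simp only: prod.case cnj_sum complex_cnj_mult complex_cnj_cnj prod_sums2)
    apply (intro sum.cong refl)
    apply (simp only: mult_ac)
    done
  show ?thesis unfolding L R by (rule sum4_swap[symmetric])
qed

lemma pt_tensor_pow: "partial_transpose (tensor_pow \<rho> n) = tensor_pow (partial_transpose \<rho>) n"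
  by (auto simp: partial_transpose_def tensor_pow_def fun_eq_iff)

lemma Kr_delta:
  assumes "pa x \<in> I" "pa x' \<in> I" "pb y \<in> J" "pb y' \<in> J" "finite I" "finite J"
  shows "Kr I J (\<lambda>x p. \<alpha> x * (if p = pa x then 1 else 0)) (\<lambda>y q. \<beta> y * (if q = pb y then 1 else 0)) X (x,y) (x',y')
     = \<alpha> x * \<beta> y * X (pa x, pb y) (pa x', pb y') * cnj (\<alpha> x') * cnj (\<beta> y')"
proof -
  let ?S = "I \<times> J \<times> I \<times> J"
  let ?C = "\<alpha> x * \<beta> y * X (pa x, pb y) (pa x', pb y') * cnj (\<alpha> x') * cnj (\<beta> y')"
  have e: "\<And>g. (\<Sum>p\<in>I. \<Sum>q\<in>J. \<Sum>p'\<in>I. \<Sum>q'\<in>J. g p q p' q') = (\<Sum>(p,q,p',q')\<in>?S. g p q p' q')"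
    by (simp add: sum.cartesian_product[symmetric])
  have "Kr I J (\<lambda>x p. \<alpha> x * (if p = pa x then 1 else 0)) (\<lambda>y q. \<beta> y * (if q = pb y then 1 else 0)) X (x,y) (x',y')
     = (\<Sum>z\<in>?S. if z = (pa x, pb y, pa x', pb y') then ?C else 0)"
    unfolding Kr_def prod.case e
    by (intro sum.cong refl) (auto split: if_split_asm)
  also have "\<dots> = ?C" using assms by (simp add: sum.delta)
  finally show ?thesis .
qed

lemma prod_sum4_lsts:
  fixes F :: "nat \<Rightarrow> 'a \<Rightarrow> 'a \<Rightarrow> 'a \<Rightarrow> 'a \<Rightarrow> complex"
  assumes "finite T"
  shows "(\<Prod>k<n. \<Sum>p\<in>T. \<Sum>q\<in>T. \<Sum>p'\<in>T. \<Sum>q'\<in>T. F k p q p' q') =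
    (\<Sum>ps\<in>lsts n T. \<Sum>qs\<in>lsts n T. \<Sum>ps'\<in>lsts n T. \<Sum>qs'\<in>lsts n T. \<Prod>k<n. F k (ps!k) (qs!k) (ps'!k) (qs'!k))"
  by (simp add: prod_sum_lsts[OF assms])

lemma prod_Kr:
  assumes "finite T"
  shows "(\<Prod>k<n. Kr T T (A k) (B k) X (xs!k, ys!k) (xs'!k, ys'!k)) =
    Kr (lsts n T) (lsts n T) (\<lambda>xs ps. \<Prod>k<n. A k (xs!k) (ps!k)) (\<lambda>ys qs. \<Prod>k<n. B k (ys!k) (qs!k))
       (tensor_pow X n) (xs,ys) (xs',ys')"
  unfolding Kr_def tensor_pow_def
  by (simp add: prod_sum4_lsts[OF assms] prod.distrib)

lemma lsts_nth: "xs \<in> lsts n T \<Longrightarrow> k < n \<Longrightarrow> xs ! k \<in> T"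
  unfolding lsts_def by auto

lemma tensor_Kr:
  fixes Jx :: "'j set" and A B :: "'j \<Rightarrow> nat \<Rightarrow> nat \<Rightarrow> complex"
  assumes "finite Jx" "finite T"
   and M: "\<And>u u'. u \<in> T \<times> T \<Longrightarrow> u' \<in> T \<times> T \<Longrightarrow> M u u' = (\<Sum>j\<in>Jx. Kr T T (A j) (B j) G u u')"
   and "u \<in> lsts n T \<times> lsts n T" "u' \<in> lsts n T \<times> lsts n T"
  shows "tensor_pow M n u u' = (\<Sum>js\<in>lsts n Jx. Kr (lsts n T) (lsts n T)
      (\<lambda>xs ps. \<Prod>k<n. A (js!k) (xs!k) (ps!k)) (\<lambda>ys qs. \<Prod>k<n. B (js!k) (ys!k) (qs!k)) (tensor_pow G n) u u')"
proof -
  obtain xs ys xs' ys' where u: "u = (xs,ys)" and u': "u' = (xs',ys')" by (cases u, cases u') auto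
  have "tensor_pow M n u u' = (\<Prod>k<n. M (xs!k, ys!k) (xs'!k, ys'!k))"
    by (simp add: u u' tensor_pow_def)
  also have "\<dots> = (\<Prod>k<n. \<Sum>j\<in>Jx. Kr T T (A j) (B j) G (xs!k, ys!k) (xs'!k, ys'!k))"
    using assms(4,5) by (intro prod.cong refl M) (auto simp: u u' lsts_nth)
  also have "\<dots> = (\<Sum>js\<in>lsts n Jx. \<Prod>k<n. Kr T T (A (js!k)) (B (js!k)) G (xs!k, ys!k) (xs'!k, ys'!k))"
    by (rule prod_sum_lsts[OF assms(1)])
  also have "\<dots> = (\<Sum>js\<in>lsts n Jx. Kr (lsts n T) (lsts n T)
      (\<lambda>xs ps. \<Prod>k<n. A (js!k) (xs!k) (ps!k)) (\<lambda>ys qs. \<Prod>k<n. B (js!k) (ys!k) (qs!k)) (tensor_pow G n) u u')"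
    unfolding u u' by (intro sum.cong refl prod_Kr[OF assms(2)])
  finally show ?thesis .
qed

lemma weak2_Kr:
  assumes "weak2 I J \<phi>"
  shows "weak2 I J (\<lambda>(p,q). \<Sum>x\<in>I. \<Sum>y\<in>J. cnj (A x p) * cnj (B y q) * \<phi> (x,y))"
proof -
  obtain a1 a2 b1 b2 where ab: "\<forall>x\<in>I. \<forall>y\<in>J. \<phi> (x,y) = a1 x * b1 y + a2 x * b2 y"
    using assms unfolding weak2_def by blast
  have "(\<Sum>x\<in>I. \<Sum>y\<in>J. cnj (A x p) * cnj (B y q) * \<phi> (x,y)) =
     (\<Sum>x\<in>I. cnj (A x p) * a1 x) * (\<Sum>y\<in>J. cnj (B y q) * b1 y) +
     (\<Sum>x\<in>I. cnj (A x p) * a2 x) * (\<Sum>y\<in>J. cnj (B y q) * b2 y)" for p q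
    using ab by (simp add: sum_product sum.distrib[symmetric] algebra_simps)
  then show ?thesis unfolding weak2_def by (intro exI) auto
qed

lemma weak_transfer:
  fixes Jx :: "'j set" and A B :: "'j \<Rightarrow> nat \<Rightarrow> nat \<Rightarrow> complex"
  assumes "finite Jx" "finite T"
   and M: "\<And>u u'. u \<in> T \<times> T \<Longrightarrow> u' \<in> T \<times> T \<Longrightarrow> M u u' = (\<Sum>j\<in>Jx. Kr T T (A j) (B j) G u u')"
   and G: "\<And>\<phi>. weak2 (lsts n T) (lsts n T) \<phi> \<Longrightarrow> cnonneg (qform (lsts n T) (lsts n T) (tensor_pow G n) \<phi>)"
   and w: "weak2 (lsts n T) (lsts n T) \<phi>"
  shows "cnonneg (qform (lsts n T) (lsts n T) (tensor_pow M n) \<phi>)"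
proof -
  let ?L = "lsts n T"
  have "qform ?L ?L (tensor_pow M n) \<phi> = qform ?L ?L (\<lambda>u u'. \<Sum>js\<in>lsts n Jx. Kr ?L ?L
      (\<lambda>xs ps. \<Prod>k<n. A (js!k) (xs!k) (ps!k)) (\<lambda>ys qs. \<Prod>k<n. B (js!k) (ys!k) (qs!k)) (tensor_pow G n) u u') \<phi>"
    by (intro qform_cong tensor_Kr[OF assms(1,2) M]) auto
  also have "\<dots> = (\<Sum>js\<in>lsts n Jx. qform ?L ?L (Kr ?L ?L
      (\<lambda>xs ps. \<Prod>k<n. A (js!k) (xs!k) (ps!k)) (\<lambda>ys qs. \<Prod>k<n. B (js!k) (ys!k) (qs!k)) (tensor_pow G n)) \<phi>)"
    by (rule qform_sum)
  finally show ?thesis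
    by (simp only: qform_Kr) (intro cnonneg_sum G weak2_Kr w)
qed

lemma psd_tensor:
  fixes Jx :: "'j set" and v :: "'j \<Rightarrow> nat \<times> nat \<Rightarrow> complex"
  assumes "finite Jx" "finite T" "\<And>j. j \<in> Jx \<Longrightarrow> 0 \<le> c j"
   and M: "\<And>u u'. u \<in> T \<times> T \<Longrightarrow> u' \<in> T \<times> T \<Longrightarrow> M u u' = (\<Sum>j\<in>Jx. complex_of_real (c j) * (v j u * cnj (v j u')))"
  shows "cnonneg (qform (lsts n T) (lsts n T) (tensor_pow M n) \<psi>)"
proof -
  let ?L = "lsts n T"
  define V where "V js = (\<lambda>(xs,ys). \<Prod>k<n. v (js!k) (xs!k, ys!k))" for js
  define C where "C js = (\<Prod>k<n. c (js!k))" for js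
  have T: "tensor_pow M n u u' = (\<Sum>js\<in>lsts n Jx. complex_of_real (C js) * (V js u * cnj (V js u')))"
    if "u \<in> ?L \<times> ?L" "u' \<in> ?L \<times> ?L" for u u'
  proof -
    obtain xs ys xs' ys' where u: "u = (xs,ys)" and u': "u' = (xs',ys')" by (cases u, cases u') auto
    have "tensor_pow M n u u' = (\<Prod>k<n. M (xs!k, ys!k) (xs'!k, ys'!k))"
      by (simp add: u u' tensor_pow_def)
    also have "\<dots> = (\<Prod>k<n. \<Sum>j\<in>Jx. complex_of_real (c j) * (v j (xs!k, ys!k) * cnj (v j (xs'!k, ys'!k))))"
      using that by (intro prod.cong refl M) (auto simp: u u' lsts_nth)
    also have "\<dots> = (\<Sum>js\<in>lsts n Jx. \<Prod>k<n. complex_of_real (c (js!k)) * (v (js!k) (xs!k, ys!k) * cnj (v (js!k) (xs'!k, ys'!k))))"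
      by (rule prod_sum_lsts[OF assms(1)])
    also have "\<dots> = (\<Sum>js\<in>lsts n Jx. complex_of_real (C js) * (V js u * cnj (V js u')))"
      unfolding u u' V_def C_def by (simp add: prod.distrib)
    finally show ?thesis .
  qed
  have Q: "qform ?L ?L (\<lambda>u u'. complex_of_real r * (W u * cnj (W u'))) \<psi> =
     complex_of_real (r * (cmod (\<Sum>u\<in>?L\<times>?L. cnj (W u) * \<psi> u))\<^sup>2)" for r W
  proof -
    let ?s = "\<Sum>u\<in>?L\<times>?L. cnj (W u) * \<psi> u"
    have "qform ?L ?L (\<lambda>u u'. complex_of_real r * (W u * cnj (W u'))) \<psi> = complex_of_real r * (cnj ?s * ?s)"
      unfolding qform_def by (simp add: sum_distrib_left sum_distrib_right sum_product mult_ac) (rule sum.swap)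
    also have "\<dots> = complex_of_real (r * (cmod ?s)\<^sup>2)"
    proof -
      have "cnj z * z = complex_of_real ((cmod z)\<^sup>2)" for z
        by (simp only: complex_norm_square mult.commute)
      then show ?thesis by (simp only: of_real_mult)
    qed
    finally show ?thesis .
  qed
  have "qform ?L ?L (tensor_pow M n) \<psi> = qform ?L ?L (\<lambda>u u'. \<Sum>js\<in>lsts n Jx. complex_of_real (C js) * (V js u * cnj (V js u'))) \<psi>"
    by (intro qform_cong T) auto
  also have "\<dots> = (\<Sum>js\<in>lsts n Jx. complex_of_real (C js * (cmod (\<Sum>u\<in>?L\<times>?L. cnj (V js u) * \<psi> u))\<^sup>2))"
    by (simp only: qform_sum Q)
  finally have eq: "qform ?L ?L (tensor_pow M n) \<psi> = (\<Sum>js\<in>lsts n Jx. complex_of_real (C js * (cmod (\<Sum>u\<in>?L\<times>?L. cnj (V js u) * \<psi> u))\<^sup>2))" .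
  have Cn: "js \<in> lsts n Jx \<Longrightarrow> 0 \<le> C js" for js
    unfolding C_def using assms(3) by (auto intro!: prod_nonneg simp: lsts_nth)
  show ?thesis unfolding eq
    by (intro cnonneg_sum cnonneg_of_real mult_nonneg_nonneg Cn) auto
qed

lemma sum3_rename: "(\<Sum>y\<in>J. \<Sum>x'\<in>I. \<Sum>y'\<in>J. H y x' y') = (\<Sum>y\<in>J. \<Sum>x'\<in>I. \<Sum>y'\<in>J. H y' x' y)"
proof -
  have "(\<Sum>y\<in>J. \<Sum>x'\<in>I. \<Sum>y'\<in>J. H y' x' y) = (\<Sum>y\<in>J. \<Sum>y'\<in>J. \<Sum>x'\<in>I. H y' x' y)"
    by (intro sum.cong refl sum.swap)
  also have "\<dots> = (\<Sum>y'\<in>J. \<Sum>y\<in>J. \<Sum>x'\<in>I. H y' x' y)"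
    by (rule sum.swap)
  also have "\<dots> = (\<Sum>y\<in>J. \<Sum>x'\<in>I. \<Sum>y'\<in>J. H y x' y')"
    by (intro sum.cong refl sum.swap)
  finally show ?thesis ..
qed

lemma qform_pt_prod:
  "qform I J (partial_transpose R) (\<lambda>(x,y). a x * b y) = qform I J R (\<lambda>(x,y). a x * cnj (b y))"
proof -
  have "qform I J (partial_transpose R) (\<lambda>(x,y). a x * b y) =
     (\<Sum>x\<in>I. \<Sum>y\<in>J. \<Sum>x'\<in>I. \<Sum>y'\<in>J. cnj (a x) * cnj (b y) * R (x,y') (x',y) * a x' * b y')"
    unfolding qform_def partial_transpose_def sum_pair by (intro sum.cong refl) (simp add: mult_ac)
  also have "\<dots> = (\<Sum>x\<in>I. \<Sum>y\<in>J. \<Sum>x'\<in>I. \<Sum>y'\<in>J. cnj (a x) * cnj (b y') * R (x,y) (x',y') * a x' * b y)"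
    by (intro sum.cong refl sum3_rename)
  also have "\<dots> = qform I J R (\<lambda>(x,y). a x * cnj (b y))"
    unfolding qform_def sum_pair by (intro sum.cong refl) (simp add: mult_ac)
  finally show ?thesis .
qed

lemma dep_solve:
  fixes \<alpha> \<beta> u v :: complex
  assumes "\<alpha> * u + \<beta> * v = 0" "\<beta> \<noteq> 0"
  shows "v = - (\<alpha> / \<beta>) * u"
proof -
  have "\<beta> * v = - (\<alpha> * u)" using assms(1) by (simp add: eq_neg_iff_add_eq_0 add.commute)
  then show ?thesis using assms(2) by (simp add: field_simps)
qed

lemma degenerate_prod:
  assumes "\<not> (lin_indep2 I a1 a2 \<and> lin_indep2 J b1 b2)"
  shows "\<exists>a b. \<forall>x\<in>I. \<forall>y\<in>J. a1 x * b1 y + a2 x * b2 y = a x * b y"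
proof (cases "lin_indep2 I a1 a2")
  case False
  then obtain \<alpha> \<beta> where ab: "\<forall>x\<in>I. \<alpha> * a1 x + \<beta> * a2 x = 0" and nz: "\<not> (\<alpha> = 0 \<and> \<beta> = 0)"
    unfolding lin_indep2_def by blast
  show ?thesis
  proof (cases "\<beta> = 0")
    case True
    then have "\<forall>x\<in>I. a1 x = 0" using ab nz by auto
    then show ?thesis by (intro exI[of _ a2] exI[of _ b2]) auto
  next
    case False
    have eq: "a1 x * b1 y + a2 x * b2 y = a1 x * (\<lambda>y. b1 y - (\<alpha> / \<beta>) * b2 y) y" if "x \<in> I" for x y
    proof -
      have "a2 x = - (\<alpha> / \<beta>) * a1 x" using dep_solve[of \<alpha> "a1 x" \<beta> "a2 x"] ab that False by blast
      then show ?thesis by (simp add: algebra_simps)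
    qed
    show ?thesis by (intro exI[of _ a1] exI[of _ "\<lambda>y. b1 y - (\<alpha> / \<beta>) * b2 y"] ballI eq)
  qed
next
  case True
  then have "\<not> lin_indep2 J b1 b2" using assms by blast
  then obtain \<alpha> \<beta> where ab: "\<forall>y\<in>J. \<alpha> * b1 y + \<beta> * b2 y = 0" and nz: "\<not> (\<alpha> = 0 \<and> \<beta> = 0)"
    unfolding lin_indep2_def by blast
  show ?thesis
  proof (cases "\<beta> = 0")
    case True
    then have "\<forall>y\<in>J. b1 y = 0" using ab nz by auto
    then show ?thesis by (intro exI[of _ a2] exI[of _ b2]) auto
  next
    case False
    have eq: "a1 x * b1 y + a2 x * b2 y = (\<lambda>x. a1 x - (\<alpha> / \<beta>) * a2 x) x * b1 y" if "y \<in> J" for x y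
    proof -
      have "b2 y = - (\<alpha> / \<beta>) * b1 y" using dep_solve[of \<alpha> "b1 y" \<beta> "b2 y"] ab that False by blast
      then show ?thesis by (simp add: algebra_simps)
    qed
    show ?thesis by (intro exI[of _ "\<lambda>x. a1 x - (\<alpha> / \<beta>) * a2 x"] exI[of _ b1] ballI eq)
  qed
qed

lemma weak_from_strict:
  assumes P: "pseudo_one_copy_undist I J R"
   and psd: "\<And>\<psi>. cnonneg (qform I J R \<psi>)"
   and w: "weak2 I J \<phi>"
  shows "cnonneg (qform I J (partial_transpose R) \<phi>)"
proof -
  obtain a1 a2 b1 b2 where ab: "\<forall>x\<in>I. \<forall>y\<in>J. \<phi> (x,y) = a1 x * b1 y + a2 x * b2 y"
    using w unfolding weak2_def by blast
  show ?thesis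
  proof (cases "lin_indep2 I a1 a2 \<and> lin_indep2 J b1 b2")
    case True
    then have "schmidt_rank_two I J \<phi>" unfolding schmidt_rank_two_def using ab by (intro exI conjI) auto
    then show ?thesis using P unfolding pseudo_one_copy_undist_def by simp
  next
    case False
    then obtain a b where e: "\<forall>x\<in>I. \<forall>y\<in>J. a1 x * b1 y + a2 x * b2 y = a x * b y"
      using degenerate_prod[of I a1 a2 J b1 b2] by metis
    have "qform I J (partial_transpose R) \<phi> = qform I J (partial_transpose R) (\<lambda>(x,y). a x * b y)"
      by (rule qform_cong_vec) (use ab e in auto)
    also have "\<dots> = qform I J R (\<lambda>(x,y). a x * cnj (b y))" by (rule qform_pt_prod)
    finally show ?thesis using psd[of "\<lambda>(x,y). a x * cnj (b y)"] by simp
  qed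
qed

definition shape :: "real \<Rightarrow> real \<Rightarrow> real \<Rightarrow> nat \<times> nat \<Rightarrow> nat \<times> nat \<Rightarrow> complex" where
  "shape \<alpha> \<beta> \<gamma> = (\<lambda>(x,y) (x',y'). complex_of_real
     (if x = y \<and> x' = y' then (if x = x' then \<alpha> else \<gamma>) else if x = x' \<and> y = y' then \<beta> else 0))"

lemma ket2_if: "ket2 i j u = (if (i,j) = u then 1 else 0)"
  by (cases u) (auto simp: ket2_def)

lemma sqrt2_sq: "complex_of_real (sqrt 2) * complex_of_real (sqrt 2) = 2"
  by (simp flip: of_real_mult)

lemma proj_psi: "proj (psi s i j) u u' =
   (ket2 i j u + s * ket2 j i u) * (ket2 i j u' + cnj s * ket2 j i u') / 2"
proof -
  have k: "cnj (ket2 a b v) = ket2 a b v" for a b v by (simp add: ket2_if)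
  let ?r = "complex_of_real (sqrt 2)"
  have c: "cnj ((ket2 i j u' + s * ket2 j i u') / ?r) = (ket2 i j u' + cnj s * ket2 j i u') / ?r"
    by (simp add: k)
  have "(A / ?r) * (B / ?r) = A * B / 2" for A B
    by (simp flip: sqrt2_sq)
  then show ?thesis unfolding proj_def psi_def c by simp
qed

lemma sum_ind2:
  assumes "finite P"
  shows "(\<Sum>p\<in>P. (if p = a then 1 else 0) * (if p = b then 1 else (0::complex))) = (if a \<in> P \<and> a = b then 1 else 0)"
proof -
  have "(\<Sum>p\<in>P. (if p = a then 1 else 0) * (if p = b then 1 else (0::complex))) =
     (\<Sum>p\<in>P. if p = a then (if a = b then 1 else 0) else 0)"
    by (intro sum.cong refl) auto
  also have "\<dots> = (if a \<in> P \<and> a = b then 1 else 0)" using assms by (auto simp: sum.delta)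
  finally show ?thesis .
qed

lemma finite_pairs: "finite (pairs_lt d)"
  by (rule finite_subset[of _ "{..<d} \<times> {..<d}"]) (auto simp: pairs_lt_def)

lemma sum_psi:
  "(\<Sum>(i,j)\<in>pairs_lt d. proj (psi s i j) (x,y) (x',y')) =
    ((if (x,y) \<in> pairs_lt d \<and> (x,y) = (x',y') then 1 else 0)
    + cnj s * (if (x,y) \<in> pairs_lt d \<and> (x,y) = (y',x') then 1 else 0)
    + s * (if (y,x) \<in> pairs_lt d \<and> (y,x) = (x',y') then 1 else 0)
    + s * cnj s * (if (y,x) \<in> pairs_lt d \<and> (y,x) = (y',x') then 1 else 0)) / 2"
proof -
  have e: "(\<Sum>(i,j)\<in>pairs_lt d. proj (psi s i j) (x,y) (x',y')) =
    (\<Sum>p\<in>pairs_lt d. ((if p = (x,y) then 1 else 0) + s * (if p = (y,x) then 1 else 0)) *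
        ((if p = (x',y') then 1 else 0) + cnj s * (if p = (y',x') then 1 else 0)) / 2)"
  proof (intro sum.cong refl)
    fix p assume "p \<in> pairs_lt d"
    obtain i j where p: "p = (i,j)" by (cases p)
    have k1: "ket2 i j (a,b) = (if (i,j) = (a,b) then 1 else 0)" for a b by (auto simp: ket2_def)
    have k2: "ket2 j i (a,b) = (if (i,j) = (b,a) then 1 else 0)" for a b by (auto simp: ket2_def)
    show "(case p of (i, j) \<Rightarrow> proj (psi s i j) (x, y) (x', y')) =
      ((if p = (x,y) then 1 else 0) + s * (if p = (y,x) then 1 else 0)) *
        ((if p = (x',y') then 1 else 0) + cnj s * (if p = (y',x') then 1 else 0)) / 2"
      unfolding p prod.case proj_psi k1 k2 ..
  qed
  let ?I = "\<lambda>p a. if p = a then 1 else (0::complex)"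
  have e2: "(\<Sum>p\<in>pairs_lt d. (?I p (x,y) + s * ?I p (y,x)) * (?I p (x',y') + cnj s * ?I p (y',x')) / 2) =
     ((\<Sum>p\<in>pairs_lt d. ?I p (x,y) * ?I p (x',y')) + cnj s * (\<Sum>p\<in>pairs_lt d. ?I p (x,y) * ?I p (y',x'))
     + s * (\<Sum>p\<in>pairs_lt d. ?I p (y,x) * ?I p (x',y')) + s * cnj s * (\<Sum>p\<in>pairs_lt d. ?I p (y,x) * ?I p (y',x'))) / 2"
    by (simp only: sum_divide_distrib[symmetric] sum_distrib_left sum.distrib[symmetric] algebra_simps)
  show ?thesis unfolding e e2 sum_ind2[OF finite_pairs] ..
qed

lemma sum_diag:
  "(\<Sum>i<d. proj (ket2 i i) (x,y) (x',y')) = (if x = y \<and> x' = y' \<and> x = x' \<and> x < d then 1 else 0)"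
proof -
  have "(\<Sum>i<d. proj (ket2 i i) (x,y) (x',y')) = (\<Sum>i<d. if i = x then (if x = y \<and> x' = y' \<and> x = x' then 1 else 0) else 0)"
    by (intro sum.cong refl) (auto simp: proj_def ket2_def)
  also have "\<dots> = (if x = y \<and> x' = y' \<and> x = x' \<and> x < d then 1 else 0)"
    by (auto simp: sum.delta)
  finally show ?thesis .
qed

lemma pairs_lt_mem: "((a,b) \<in> pairs_lt d) = (a < b \<and> b < d)"
  by (simp add: pairs_lt_def)

lemma rho_pt_shape:
  assumes "x < d" "y < d" "x' < d" "y' < d"
  shows "partial_transpose (rho_bc d b c) (x,y) (x',y') = shape (coef_a d b c) ((b+c)/2) ((c-b)/2) (x,y) (x',y')"
  unfolding partial_transpose_def rho_bc_def prod.case sum_diag sum_psi pairs_lt_mem shape_def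
  using assms by (auto simp: field_simps)

definition Uv :: "nat \<Rightarrow> nat \<Rightarrow> nat \<Rightarrow> nat \<Rightarrow> complex" where
  "Uv i j s x = (if x = i then 1 else if x = j then \<i> ^ s else 0)"
definition Vv :: "nat \<Rightarrow> nat \<Rightarrow> nat \<Rightarrow> nat \<Rightarrow> complex" where
  "Vv i j s y = (if y = i then 1 else if y = j then - ((- \<i>) ^ s) else 0)"

definition Eij :: "nat \<Rightarrow> nat \<Rightarrow> nat \<Rightarrow> nat \<Rightarrow> nat \<times> nat \<Rightarrow> complex" where
  "Eij x y x' y' p =
     (if fst p = x \<and> x = y \<and> x = x' \<and> x = y' then 1 else 0)
   + (if snd p = x \<and> x = y \<and> x = x' \<and> x = y' then 1 else 0)
   + (if p = (x,y) \<and> x' = x \<and> y' = y then 1 else 0)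
   + (if p = (y,x) \<and> x' = x \<and> y' = y then 1 else 0)
   - (if p = (x,x') \<and> x = y \<and> x' = y' then 1 else 0)
   - (if p = (x',x) \<and> x = y \<and> x' = y' then 1 else 0)"

lemma sum4: "(\<Sum>s<(4::nat). f s) = f 0 + f 1 + f 2 + (f 3 :: complex)"
  by (simp add: eval_nat_numeral)

lemma phase_pair:
  assumes "i \<noteq> j"
  shows "(\<Sum>s<4. Uv i j s x * Vv i j s y * cnj (Uv i j s x') * cnj (Vv i j s y')) = 4 * Eij x y x' y' (i,j)"
  unfolding sum4 Uv_def Vv_def Eij_def using assms
  by (auto simp: eval_nat_numeral)

definition OP :: "nat \<Rightarrow> (nat \<times> nat) set" where
  "OP d = {(i,j). i < d \<and> j < d \<and> i \<noteq> j}"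

lemma OP_Sigma: "OP d = Sigma {..<d} (\<lambda>i. {..<d} - {i})"
  by (auto simp: OP_def)

lemma finite_OP: "finite (OP d)"
  unfolding OP_Sigma by auto

lemma sum_OP_delta: "(\<Sum>p\<in>OP d. if p = a \<and> C then 1 else 0) = (if a \<in> OP d \<and> C then (1::complex) else 0)"
proof -
  have "(\<Sum>p\<in>OP d. if p = a \<and> C then 1 else 0) = (\<Sum>p\<in>OP d. if p = a then (if C then 1 else 0) else (0::complex))"
    by (intro sum.cong) auto
  then show ?thesis using finite_OP by (simp add: sum.delta)
qed

lemma sum_OP_fst: "x < d \<Longrightarrow> (\<Sum>p\<in>OP d. if fst p = x \<and> C then 1 else 0) = (if C then of_nat d - 1 else (0::complex))"
proof -
  assume x: "x < d"
  have "(\<Sum>p\<in>OP d. if fst p = x \<and> C then 1 else 0) = (\<Sum>i<d. \<Sum>j\<in>{..<d} - {i}. if i = x \<and> C then 1 else (0::complex))"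
    unfolding OP_Sigma by (subst sum.Sigma) (simp_all add: split_def)
  also have "\<dots> = (\<Sum>i<d. if i = x then (if C then of_nat (card ({..<d} - {i})) else 0) else 0)"
    by (intro sum.cong) auto
  also have "\<dots> = (if C then of_nat d - 1 else 0)"
    using x by (simp add: sum.delta card_Diff_singleton of_nat_diff)
  finally show ?thesis .
qed

lemma sum_OP_snd: "x < d \<Longrightarrow> (\<Sum>p\<in>OP d. if snd p = x \<and> C then 1 else 0) = (if C then of_nat d - 1 else (0::complex))"
proof -
  assume x: "x < d"
  have "(\<Sum>p\<in>OP d. if snd p = x \<and> C then 1 else 0) = (\<Sum>i<d. \<Sum>j\<in>{..<d} - {i}. if j = x \<and> C then 1 else (0::complex))"
    unfolding OP_Sigma by (subst sum.Sigma) (simp_all add: split_def)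
  also have "\<dots> = (\<Sum>i<d. if C then (if i \<noteq> x then 1 else 0) else 0)"
    using x by (intro sum.cong refl) (auto simp: sum.delta)
  also have "\<dots> = (if C then of_nat (card ({..<d} - {x})) else 0)"
    proof -
      have "{i. i \<noteq> x} = - {x}" by auto
      then show ?thesis by (auto simp: sum.If_cases Diff_eq Int_commute)
    qed
  also have "\<dots> = (if C then of_nat d - 1 else 0)"
    using x by (simp add: card_Diff_singleton of_nat_diff)
  finally show ?thesis .
qed

lemma sum_Eij:
  assumes "x < d" "y < d" "x' < d" "y' < d"
  shows "(\<Sum>p\<in>OP d. Eij x y x' y' p) = 2 * shape (real d - 1) 1 (-1) (x,y) (x',y')"
  unfolding Eij_def sum.distrib sum_subtractf sum_OP_delta sum_OP_fst[OF assms(1)] sum_OP_snd[OF assms(1)]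
  using assms by (auto simp: shape_def OP_def)

lemma shape_apply: "shape \<alpha> \<beta> \<gamma> (x,y) (x',y') = complex_of_real
     (if x = y \<and> x' = y' then (if x = x' then \<alpha> else \<gamma>) else if x = x' \<and> y = y' then \<beta> else 0)"
  by (simp add: shape_def)

lemma sum_OP_N:
  "(\<Sum>(i,j)\<in>OP d. (if x = i then 1 else 0) * (if y = j then 1 else 0) * cnj (if x' = i then 1 else 0) * cnj (if y' = j then 1 else (0::complex)))
    = shape 0 1 0 (x,y) (x',y')" if "x < d" "y < d"
proof -
  have "(\<Sum>(i,j)\<in>OP d. (if x = i then 1 else 0) * (if y = j then 1 else 0) * cnj (if x' = i then 1 else 0) * cnj (if y' = j then 1 else (0::complex)))
     = (\<Sum>p\<in>OP d. if p = (x,y) \<and> (x' = x \<and> y' = y) then 1 else 0)"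
    by (intro sum.cong refl) (auto split: if_split_asm)
  also have "\<dots> = shape 0 1 0 (x,y) (x',y')"
    unfolding sum_OP_delta using that by (auto simp: shape_def OP_def)
  finally show ?thesis .
qed

lemma rho_psd_decomp:
  "rho_bc d b c u u' = (\<Sum>j\<in>{..<d} <+> (pairs_lt d <+> pairs_lt d).
     complex_of_real (case j of Inl _ \<Rightarrow> coef_a d b c | Inr (Inl _) \<Rightarrow> b | Inr (Inr _) \<Rightarrow> c) *
     ((case j of Inl i \<Rightarrow> ket2 i i | Inr (Inl (i,j)) \<Rightarrow> psi (-1) i j | Inr (Inr (i,j)) \<Rightarrow> psi 1 i j) u *
      cnj ((case j of Inl i \<Rightarrow> ket2 i i | Inr (Inl (i,j)) \<Rightarrow> psi (-1) i j | Inr (Inr (i,j)) \<Rightarrow> psi 1 i j) u')))"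
  unfolding rho_bc_def
  by (simp add: sum.Plus finite_pairs sum_distrib_left proj_def split_def)

type_synonym kidx = "unit + ((nat \<times> nat) \<times> nat + nat \<times> nat)"

definition Jx :: "nat \<Rightarrow> kidx set" where
  "Jx d = UNIV <+> ((OP d \<times> {..<4}) <+> OP d)"

definition al :: "real \<Rightarrow> real \<Rightarrow> real \<Rightarrow> kidx \<Rightarrow> nat \<Rightarrow> complex" where
  "al k0 kE kN j x = (case j of Inl _ \<Rightarrow> complex_of_real k0
     | Inr (Inl ((i,i'),s)) \<Rightarrow> complex_of_real kE * Uv i i' s x
     | Inr (Inr (i,i')) \<Rightarrow> complex_of_real kN * (if x = i then 1 else 0))"

definition be :: "kidx \<Rightarrow> nat \<Rightarrow> complex" where
  "be j y = (case j of Inl _ \<Rightarrow> 1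
     | Inr (Inl ((i,i'),s)) \<Rightarrow> Vv i i' s y
     | Inr (Inr (i,i')) \<Rightarrow> (if y = i' then 1 else 0))"

definition pa :: "kidx \<Rightarrow> nat \<Rightarrow> nat" where
  "pa j x = (case j of Inl _ \<Rightarrow> x | Inr _ \<Rightarrow> 0)"

definition pb :: "kidx \<Rightarrow> nat \<Rightarrow> nat" where
  "pb j y = (case j of Inl _ \<Rightarrow> y | Inr _ \<Rightarrow> 1)"

definition KA :: "real \<Rightarrow> real \<Rightarrow> real \<Rightarrow> kidx \<Rightarrow> nat \<Rightarrow> nat \<Rightarrow> complex" where
  "KA k0 kE kN j x p = al k0 kE kN j x * (if p = pa j x then 1 else 0)"

definition KB :: "kidx \<Rightarrow> nat \<Rightarrow> nat \<Rightarrow> complex" where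
  "KB j y q = be j y * (if q = pb j y then 1 else 0)"

lemma finite_Jx: "finite (Jx d)"
  unfolding Jx_def using finite_OP by auto

lemma per_copy:
  fixes G :: "nat \<times> nat \<Rightarrow> nat \<times> nat \<Rightarrow> complex"
  assumes d: "2 \<le> d" and xy: "x < d" "y < d" "x' < d" "y' < d"
    and G01: "G (0,1) (0,1) = complex_of_real tG"
  shows "(\<Sum>j\<in>Jx d. Kr {..<d} {..<d} (KA k0 kE kN j) (KB j) G (x,y) (x',y')) =
     complex_of_real (k0 * k0) * G (x,y) (x',y')
     + complex_of_real (kE * kE * tG) * (8 * shape (real d - 1) 1 (-1) (x,y) (x',y'))
     + complex_of_real (kN * kN * tG) * shape 0 1 0 (x,y) (x',y')"
proof -
  have Kr: "Kr {..<d} {..<d} (KA k0 kE kN j) (KB j) G (x,y) (x',y') =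
     al k0 kE kN j x * be j y * G (pa j x, pb j y) (pa j x', pb j y') * cnj (al k0 kE kN j x') * cnj (be j y')" for j
    unfolding KA_def KB_def
    by (rule Kr_delta) (use d xy in \<open>auto simp: pa_def pb_def split: sum.splits\<close>)
  have s1: "(\<Sum>j\<in>(UNIV::unit set). al k0 kE kN (Inl j) x * be (Inl j) y * G (pa (Inl j) x, pb (Inl j) y) (pa (Inl j) x', pb (Inl j) y') * cnj (al k0 kE kN (Inl j) x') * cnj (be (Inl j) y'))
     = complex_of_real (k0 * k0) * G (x,y) (x',y')"
    by (simp add: al_def be_def pa_def pb_def)
  have s2: "(\<Sum>j\<in>OP d \<times> {..<4}. al k0 kE kN (Inr (Inl j)) x * be (Inr (Inl j)) y * G (pa (Inr (Inl j)) x, pb (Inr (Inl j)) y) (pa (Inr (Inl j)) x', pb (Inr (Inl j)) y') * cnj (al k0 kE kN (Inr (Inl j)) x') * cnj (be (Inr (Inl j)) y'))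
     = complex_of_real (kE * kE * tG) * (8 * shape (real d - 1) 1 (-1) (x,y) (x',y'))"
  proof -
    have "(\<Sum>j\<in>OP d \<times> {..<4}. al k0 kE kN (Inr (Inl j)) x * be (Inr (Inl j)) y * G (pa (Inr (Inl j)) x, pb (Inr (Inl j)) y) (pa (Inr (Inl j)) x', pb (Inr (Inl j)) y') * cnj (al k0 kE kN (Inr (Inl j)) x') * cnj (be (Inr (Inl j)) y'))
      = (\<Sum>p\<in>OP d. \<Sum>s<4. complex_of_real (kE * kE * tG) * (Uv (fst p) (snd p) s x * Vv (fst p) (snd p) s y * cnj (Uv (fst p) (snd p) s x') * cnj (Vv (fst p) (snd p) s y')))"
      using G01 by (simp add: sum.cartesian_product split_def al_def be_def pa_def pb_def mult_ac)
    also have "\<dots> = complex_of_real (kE * kE * tG) * (\<Sum>p\<in>OP d. 4 * Eij x y x' y' p)"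
      by (simp add: sum_distrib_left[symmetric] phase_pair OP_def split_def)
    also have "\<dots> = complex_of_real (kE * kE * tG) * (8 * shape (real d - 1) 1 (-1) (x,y) (x',y'))"
      using sum_Eij[OF xy] by (simp add: sum_distrib_left[symmetric])
    finally show ?thesis .
  qed
  have s3: "(\<Sum>j\<in>OP d. al k0 kE kN (Inr (Inr j)) x * be (Inr (Inr j)) y * G (pa (Inr (Inr j)) x, pb (Inr (Inr j)) y) (pa (Inr (Inr j)) x', pb (Inr (Inr j)) y') * cnj (al k0 kE kN (Inr (Inr j)) x') * cnj (be (Inr (Inr j)) y'))
     = complex_of_real (kN * kN * tG) * shape 0 1 0 (x,y) (x',y')"
  proof -
    have "(\<Sum>j\<in>OP d. al k0 kE kN (Inr (Inr j)) x * be (Inr (Inr j)) y * G (pa (Inr (Inr j)) x, pb (Inr (Inr j)) y) (pa (Inr (Inr j)) x', pb (Inr (Inr j)) y') * cnj (al k0 kE kN (Inr (Inr j)) x') * cnj (be (Inr (Inr j)) y'))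
      = complex_of_real (kN * kN * tG) * (\<Sum>(i,j)\<in>OP d. (if x = i then 1 else 0) * (if y = j then 1 else 0) * cnj (if x' = i then 1 else 0) * cnj (if y' = j then 1 else (0::complex)))"
      using G01 by (simp add: sum_distrib_left split_def al_def be_def pa_def pb_def mult_ac)
    then show ?thesis using sum_OP_N[OF xy(1,2)] by simp
  qed
  have fu: "finite (UNIV::unit set)" by simp
  show ?thesis
    unfolding Kr Jx_def
    apply (subst sum.Plus[OF fu finite_Plus[OF finite_cartesian_product[OF finite_OP finite_lessThan] finite_OP]])
    apply (subst sum.Plus[OF finite_cartesian_product[OF finite_OP finite_lessThan] finite_OP])
    apply (simp only: comp_def s1 s2 s3 add.assoc)
    done
qed

lemma shape_comb:
  "complex_of_real v * shape a1 b1 c1 u u' + complex_of_real p * shape a2 b2 c2 u u' + complex_of_real q * shape a3 b3 c3 u u'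
   = shape (v * a1 + p * a2 + q * a3) (v * b1 + p * b2 + q * b3) (v * c1 + p * c2 + q * c3) u u'"
  by (cases u; cases u') (auto simp: shape_def)

lemma srt2_weak2: "schmidt_rank_two I J \<phi> \<Longrightarrow> weak2 I J \<phi>"
  unfolding schmidt_rank_two_def weak2_def by blast

theorem lemma4:
  fixes d n :: nat and b c :: real
  assumes "d \<ge> 2" and "n \<ge> 1"
    and "pseudo_n_copy_undist d n
           (rho_bc d (3 / (real d * (2 * real d - 1))) (1 / (real d * (2 * real d - 1))))"
    and "(b, c) \<in> convex hull {(1 / (real d * (real d - 1)), 0),
                               (3 / (real d * (2 * real d - 1)), 1 / (real d * (2 * real d - 1))),
                               (1 / (real d * (real d - 1)), 1 / (real d * (real d - 1)))}"
  shows "pseudo_n_copy_undist d n (rho_bc d b c)"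
proof -
  define D where "D = real d"
  have D2: "D \<ge> 2" using assms(1) by (simp add: D_def)
  define bG where "bG = 3 / (D * (2 * D - 1))"
  define cG where "cG = 1 / (D * (2 * D - 1))"
  define bB where "bB = 1 / (D * (D - 1))"
  define tG where "tG = (bG + cG) / 2"
  define tB where "tB = 1 / (2 * D * (D - 1))"
  define tK where "tK = 1 / (D * (D - 1))"
  obtain u v w where uvw: "0 \<le> u" "0 \<le> v" "0 \<le> w" "u + v + w = 1"
    and bc: "(b, c) = u *\<^sub>R (bB, 0) + v *\<^sub>R (bG, cG) + w *\<^sub>R (bB, bB)"
    using assms(4) unfolding convex_hull_3 bG_def cG_def bB_def D_def by blast
  have b: "b = u * bB + v * bG + w * bB" and c: "c = v * cG + w * bB"
    using bc by auto
  have Dpos: "D > 0" "D - 1 > 0" "2 * D - 1 > 0" using D2 by auto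
  have tGpos: "tG > 0" using Dpos by (simp add: tG_def bG_def cG_def)
  have tBpos: "tB > 0" "tK > 0" using Dpos by (auto simp: tB_def tK_def)
  define k0 where "k0 = sqrt v"
  define kE where "kE = sqrt (u * tB / (8 * tG))"
  define kN where "kN = sqrt (w * tK / tG)"
  have k0s: "k0 * k0 = v" using uvw by (simp add: k0_def)
  have kEs: "kE * kE * tG * 8 = u * tB" using uvw tGpos tBpos by (simp add: kE_def)
  have kNs: "kN * kN * tG = w * tK" using uvw tGpos tBpos by (simp add: kN_def)
  define G1 where "G1 = partial_transpose (rho_bc d bG cG)"
  define M1 where "M1 = partial_transpose (rho_bc d b c)"
  have I1: "coef_a d b c = v * coef_a d bG cG + u * (tB * (D - 1)) + w * 0"
  proof -
    have s2: "(bG + cG) * (D * (D - 1) / 2) = 2 * (D - 1) / (2 * D - 1)"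
      unfolding bG_def cG_def using Dpos by (simp add: field_simps)
    have s3: "bB * (D * (D - 1) / 2) = 1 / 2"
      unfolding bB_def using Dpos by (simp add: field_simps)
    have "(b + c) * (D * (D - 1) / 2) = (u + 2 * w) * (bB * (D * (D - 1) / 2)) + v * ((bG + cG) * (D * (D - 1) / 2))"
      unfolding b c by (simp add: field_simps)
    then have s1: "(b + c) * (D * (D - 1) / 2) = (u + 2 * w) / 2 + 2 * v * (D - 1) / (2 * D - 1)"
      unfolding s2 s3 by simp
    have aG: "coef_a d bG cG = 1 / (D * (2 * D - 1))"
      unfolding coef_a_def D_def[symmetric] s2 using Dpos by (simp add: field_simps)
    have a: "coef_a d b c = (u / 2 + v / (2 * D - 1)) / D"
    proof -
      have "1 - (b + c) * (D * (D - 1) / 2) = u / 2 + v / (2 * D - 1)"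
      proof -
        have ue: "u = 1 - v - w" using uvw(4) by simp
        show ?thesis unfolding s1 using Dpos by (simp add: field_simps ue)
      qed
      then show ?thesis unfolding coef_a_def D_def[symmetric] by simp
    qed
    have tBD: "tB * (D - 1) = 1 / (2 * D)" unfolding tB_def using Dpos by (simp add: field_simps)
    show ?thesis unfolding a aG tBD using Dpos by (simp add: field_simps)
  qed
  have bBt: "bB = 2 * tB" "tK = bB" unfolding bB_def tB_def tK_def by auto
  have I2: "(b + c) / 2 = v * ((bG + cG) / 2) + u * tB + w * tK"
    unfolding b c bBt by (simp add: algebra_simps)
  have I3: "(c - b) / 2 = v * ((cG - bG) / 2) + u * (- tB) + w * 0"
    unfolding b c bBt by (simp add: field_simps)
  have G01: "G1 (0,1) (0,1) = complex_of_real tG"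
    unfolding G1_def using rho_pt_shape[of 0 d 1 0 1 bG cG] assms(1) by (simp add: shape_def tG_def)
  have M: "M1 uu uu' = (\<Sum>j\<in>Jx d. Kr {..<d} {..<d} (KA k0 kE kN j) (KB j) G1 uu uu')"
    if uin: "uu \<in> {..<d} \<times> {..<d}" "uu' \<in> {..<d} \<times> {..<d}" for uu uu'
  proof -
    obtain x y x' y' where u: "uu = (x,y)" "uu' = (x',y')" and xy: "x < d" "y < d" "x' < d" "y' < d"
      using uin by (cases uu; cases uu') auto
    have "(\<Sum>j\<in>Jx d. Kr {..<d} {..<d} (KA k0 kE kN j) (KB j) G1 uu uu') =
       complex_of_real (k0 * k0) * G1 (x,y) (x',y')
     + complex_of_real (kE * kE * tG) * (8 * shape (real d - 1) 1 (-1) (x,y) (x',y'))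
     + complex_of_real (kN * kN * tG) * shape 0 1 0 (x,y) (x',y')"
      unfolding u by (rule per_copy[where G=G1, OF assms(1) xy G01])
    also have "\<dots> = complex_of_real v * shape (coef_a d bG cG) ((bG + cG) / 2) ((cG - bG) / 2) (x,y) (x',y')
     + complex_of_real (u * tB) * shape (D - 1) 1 (-1) (x,y) (x',y')
     + complex_of_real (w * tK) * shape 0 1 0 (x,y) (x',y')"
    proof -
      have "complex_of_real (kE * kE * tG) * (8 * shape (real d - 1) 1 (-1) (x,y) (x',y')) =
          complex_of_real (u * tB) * shape (D - 1) 1 (-1) (x,y) (x',y')"
      proof -
        have "complex_of_real (kE * kE * tG) * (8 * shape (real d - 1) 1 (-1) (x,y) (x',y')) =
           complex_of_real (kE * kE * tG * 8) * shape (real d - 1) 1 (-1) (x,y) (x',y')"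
          by simp
        then show ?thesis unfolding kEs D_def by (simp add: mult.commute)
      qed
      then show ?thesis
        unfolding k0s kNs G1_def rho_pt_shape[OF xy] by simp
    qed
    also have "\<dots> = M1 uu uu'"
      unfolding shape_comb M1_def u rho_pt_shape[OF xy] I1 I2 I3
      by (simp add: algebra_simps)
    finally show ?thesis by simp
  qed
  have L: "lsts n {..<d} = idx d n" by (simp add: idx_lsts)
  have weakG: "cnonneg (qform (lsts n {..<d}) (lsts n {..<d}) (tensor_pow G1 n) \<phi>)"
    if "weak2 (lsts n {..<d}) (lsts n {..<d}) \<phi>" for \<phi>
  proof -
    have P: "pseudo_one_copy_undist (idx d n) (idx d n) (tensor_pow (rho_bc d bG cG) n)"
      using assms(3) unfolding pseudo_n_copy_undist_def bG_def cG_def D_def .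
    have cnn: "0 \<le> coef_a d bG cG" "0 \<le> bG" "0 \<le> cG"
      using Dpos unfolding coef_a_def bG_def cG_def D_def[symmetric]
      by (auto simp: field_simps)
    have psd: "cnonneg (qform (idx d n) (idx d n) (tensor_pow (rho_bc d bG cG) n) \<psi>)" for \<psi>
      unfolding L[symmetric]
      by (rule psd_tensor[OF finite_Plus[OF finite_lessThan finite_Plus[OF finite_pairs finite_pairs]] finite_lessThan _ rho_psd_decomp])
         (use cnn in \<open>auto split: sum.splits\<close>)
    show ?thesis
      using weak_from_strict[OF P psd, of \<phi>] that unfolding L pt_tensor_pow G1_def by simp
  qed
  show ?thesis
    unfolding pseudo_n_copy_undist_def pseudo_one_copy_undist_def pt_tensor_pow L[symmetric]
  proof (intro allI impI)
    fix \<phi> assume "schmidt_rank_two (lsts n {..<d}) (lsts n {..<d}) \<phi>"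
    then have w: "weak2 (lsts n {..<d}) (lsts n {..<d}) \<phi>" by (rule srt2_weak2)
    show "cnonneg (qform (lsts n {..<d}) (lsts n {..<d}) (tensor_pow (partial_transpose (rho_bc d b c)) n) \<phi>)"
      using weak_transfer[OF finite_Jx finite_lessThan M weakG w] unfolding M1_def .
  qed
qed

end
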